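(* Let $(\mathscr{P},\mathscr{B},\mathrm{I})$ be an incidence structure with incidence graph $\Gamma$, and let $\varphi$ be a gain function on $\Gamma$ with gain group $G$ acting on the left on a nonempty set $\Lambda$. Let $k\ge 1$ be an integer and $u_0,\dots,u_k\in\mathscr{P}\cup\mathscr{B}$. For $\lambda_0,\dots,\lambda_k\in\Lambda$, set $m_i=y_{u_i,\lambda_i}$ if $u_i\in\mathscr{B}$ and $m_i=z_{u_i,\lambda_i}$ if $u_i\in\mathscr{P}$. Then $(u_0,\dots,u_k)$ is a $k$-chain in $(\mathscr{P},\mathscr{B},\mathrm{I})$ if and only if $(m_0,\dots,m_k)$ is a $k$-chain in $\mathfrak{M}(\Gamma,\varphi)$ for some $\lambda_0,\dots,\lambda_k\in\Lambda$. Furthermore, whenever $(m_0,\dots,m_k)$ is such a $k$-chain in $\mathfrak{M}(\Gamma,\varphi)$, we have $\lambda_k=\varphi_w\cdot\lambda_0$, where $w=(u_0,e_1,u_1,\dots,u_{k-1},e_k,u_k)$ is the corresponding walk in $\Gamma$ ($e_i$ the edge joining $u_{i-1}$ and $u_i$).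
   Context: An incidence structure is a triple $(\mathscr{P},\mathscr{B},\mathrm{I})$ where $\mathscr{P}$ (points) and $\mathscr{B}$ (lines) are nonempty disjoint sets and $\mathrm{I}\subseteq\mathscr{P}\times\mathscr{B}$ is a nonempty incidence relation; write $p\ \mathrm{I}\ b$ when $(p,b)\in\mathrm{I}$. The incidence graph $\Gamma$ is the bipartite graph with vertex set $\mathscr{P}\cup\mathscr{B}$ and an edge $bp$ for each incident pair; every edge is oriented from its line to its point. A gain function with gain group $G$ assigns to each edge $e$ an element $\varphi(e)\in G$ (so $\varphi(e^{-1})=\varphi(e)^{-1}$). For a walk $w=(u_0,e_1,u_1,\dots,e_n,u_n)$, $\varphi_w=\varphi(e_n)^{\delta_n}\cdots\varphi(e_1)^{\delta_1}$ with $\delta_i=1$ if $e_i$ is oriented from $u_{i-1}$ to $u_i$ and $\delta_i=-1$ otherwise. Construction $\mathfrak{M}(\Gamma,\varphi)$: the incidence structure whose points are the formal symbols $x_p$ ($p\in\mathscr{P}$) and $y_{b,\lambda}$ ($b\in\mathscr{B},\lambda\in\Lambda$), whose lines are the formal symbols $z_{p,\lambda}$ ($p\in\mathscr{P},\lambda\in\Lambda$), and whose incidences are exactly: $x_p$ incident with $z_{p,\lambda}$ for all $\lambda$, and $y_{b,\lambda}$ incident with $z_{p,\mu}$ whenever $b\ \mathrm{I}\ p$ and $\mu=\varphi(bp)\cdot\lambda$. A $k$-chain in an incidence structure is a sequence $(u_0,\dots,u_k)$ of elements (points or lines) with $u_i$ incident with $u_{i-1}$ for all $1\le i\le k$. 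*)

theory Defs
  imports "HOL-Algebra.Group_Action"
begin

definition incidence_structure :: "'a set \<Rightarrow> 'a set \<Rightarrow> ('a \<times> 'a) set \<Rightarrow> bool" where
  "incidence_structure P B I \<longleftrightarrow>
     P \<noteq> {} \<and> B \<noteq> {} \<and> P \<inter> B = {} \<and> I \<subseteq> P \<times> B \<and> I \<noteq> {}"

definition is_chain :: "'a set \<Rightarrow> 'a set \<Rightarrow> ('a \<times> 'a) set \<Rightarrow> nat \<Rightarrow> (nat \<Rightarrow> 'a) \<Rightarrow> bool" where
  "is_chain P B I k u \<longleftrightarrow>
     (\<forall>i\<le>k. u i \<in> P \<union> B) \<and>
     (\<forall>i. 1 \<le> i \<and> i \<le> k \<longrightarrow> (u i, u (i - 1)) \<in> I \<or> (u (i - 1), u i) \<in> I)"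

datatype ('a, 'l) msym = Xs 'a | Ys 'a 'l | Zs 'a 'l

definition M_points :: "'a set \<Rightarrow> 'a set \<Rightarrow> 'l set \<Rightarrow> ('a, 'l) msym set" where
  "M_points P B \<Lambda> = {Xs p | p. p \<in> P} \<union> {Ys b l | b l. b \<in> B \<and> l \<in> \<Lambda>}"

definition M_lines :: "'a set \<Rightarrow> 'l set \<Rightarrow> ('a, 'l) msym set" where
  "M_lines P \<Lambda> = {Zs p l | p l. p \<in> P \<and> l \<in> \<Lambda>}"

text \<open>Incidences of M(Gamma, phi); gain b p is the gain of the edge bp (oriented b to p),
  act is the left action of the gain group on Lambda.\<close>
definition M_inc :: "'a set \<Rightarrow> ('a \<times> 'a) set \<Rightarrow> 'l set \<Rightarrow> ('g \<Rightarrow> 'l \<Rightarrow> 'l)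
    \<Rightarrow> ('a \<Rightarrow> 'a \<Rightarrow> 'g) \<Rightarrow> (('a, 'l) msym \<times> ('a, 'l) msym) set" where
  "M_inc P I \<Lambda> act gain =
     {(Xs p, Zs p l) | p l. p \<in> P \<and> l \<in> \<Lambda>} \<union>
     {(Ys b l, Zs p m) | b p l m. (p, b) \<in> I \<and> l \<in> \<Lambda> \<and> m = act (gain b p) l}"

definition mlab :: "'a set \<Rightarrow> (nat \<Rightarrow> 'a) \<Rightarrow> (nat \<Rightarrow> 'l) \<Rightarrow> nat \<Rightarrow> ('a, 'l) msym" where
  "mlab B u lam i = (if u i \<in> B then Ys (u i) (lam i) else Zs (u i) (lam i))"

definition step_gain :: "('g, 'c) monoid_scheme \<Rightarrow> 'a set \<Rightarrow> ('a \<Rightarrow> 'a \<Rightarrow> 'g) \<Rightarrow> 'a \<Rightarrow> 'a \<Rightarrow> 'g" where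
  "step_gain G B gain u v = (if u \<in> B then gain u v else inv\<^bsub>G\<^esub> (gain v u))"

fun walk_gain :: "('g, 'c) monoid_scheme \<Rightarrow> 'a set \<Rightarrow> ('a \<Rightarrow> 'a \<Rightarrow> 'g) \<Rightarrow> (nat \<Rightarrow> 'a) \<Rightarrow> nat \<Rightarrow> 'g" where
  "walk_gain G B gain u 0 = \<one>\<^bsub>G\<^esub>"
| "walk_gain G B gain u (Suc n) = step_gain G B gain (u n) (u (Suc n)) \<otimes>\<^bsub>G\<^esub> walk_gain G B gain u n"

end

theory Submission
  imports Defs
begin

definition lab1 :: "'a set \<Rightarrow> 'a \<Rightarrow> 'l \<Rightarrow> ('a, 'l) msym" where
  "lab1 B v l = (if v \<in> B then Ys v l else Zs v l)"

lemma step_fwd: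
  assumes inc: "incidence_structure P B I"
    and ga: "group_action G \<Lambda> act"
    and gc: "\<forall>(p, b) \<in> I. gain b p \<in> carrier G"
    and lx: "lx \<in> \<Lambda>" and ly: "ly \<in> \<Lambda>"
    and h: "(lab1 B y ly, lab1 B x lx) \<in> M_inc P I \<Lambda> act gain \<or> (lab1 B x lx, lab1 B y ly) \<in> M_inc P I \<Lambda> act gain"
  shows "((y, x) \<in> I \<or> (x, y) \<in> I) \<and> ly = act (step_gain G B gain x y) lx"
proof -
  have IPB: "I \<subseteq> P \<times> B" and dis: "P \<inter> B = {}" using inc unfolding incidence_structure_def by auto
  from h show ?thesis
  proof
    assume "(lab1 B y ly, lab1 B x lx) \<in> M_inc P I \<Lambda> act gain"
    then obtain p b where pb: "(p,b) \<in> I" "y = b" "ly \<in> \<Lambda>" "x = p" "lx = act (gain b p) ly" "y \<in> B" "x \<notin> B"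
      unfolding M_inc_def lab1_def by (auto split: if_splits)
    have g: "gain b p \<in> carrier G" using gc pb by auto
    have "act (inv\<^bsub>G\<^esub> (gain b p)) lx = ly"
      using group_action.orbit_sym_aux[OF ga g ly] pb by simp
    then show ?thesis using pb unfolding step_gain_def by auto
  next
    assume "(lab1 B x lx, lab1 B y ly) \<in> M_inc P I \<Lambda> act gain"
    then obtain p b where pb: "(p,b) \<in> I" "x = b" "y = p" "ly = act (gain b p) lx" "x \<in> B"
      unfolding M_inc_def lab1_def by (auto split: if_splits)
    then show ?thesis unfolding step_gain_def by auto
  qed
qed

lemma step_bwd:
  assumes inc: "incidence_structure P B I"
    and ga: "group_action G \<Lambda> act"
    and gc: "\<forall>(p, b) \<in> I. gain b p \<in> carrier G"
    and lx: "lx \<in> \<Lambda>"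
    and h: "(y, x) \<in> I \<or> (x, y) \<in> I"
  shows "act (step_gain G B gain x y) lx \<in> \<Lambda> \<and>
    ((lab1 B y (act (step_gain G B gain x y) lx), lab1 B x lx) \<in> M_inc P I \<Lambda> act gain \<or>
     (lab1 B x lx, lab1 B y (act (step_gain G B gain x y) lx)) \<in> M_inc P I \<Lambda> act gain)"
proof -
  have IPB: "I \<subseteq> P \<times> B" and dis: "P \<inter> B = {}" using inc unfolding incidence_structure_def by auto
  have grp: "group G" using ga group_action.group_hom group_hom.axioms(1) by blast
  from h show ?thesis
  proof
    assume yx: "(y, x) \<in> I"
    hence xB: "x \<in> B" "y \<in> P" "y \<notin> B" using IPB dis by auto
    have g: "gain x y \<in> carrier G" using gc yx by auto
    have "act (gain x y) lx \<in> \<Lambda>" using group_action.element_image[OF ga g lx] by simp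
    then show ?thesis using xB yx lx unfolding step_gain_def lab1_def M_inc_def by auto
  next
    assume xy: "(x, y) \<in> I"
    hence xB: "y \<in> B" "x \<in> P" "x \<notin> B" using IPB dis by auto
    have g: "gain y x \<in> carrier G" using gc xy by auto
    have gi: "inv\<^bsub>G\<^esub> gain y x \<in> carrier G" using g grp by (simp add: group.inv_closed)
    define l where "l = act (inv\<^bsub>G\<^esub> gain y x) lx"
    have lL: "l \<in> \<Lambda>" using group_action.element_image[OF ga gi lx] l_def by simp
    have "act (inv\<^bsub>G\<^esub> (inv\<^bsub>G\<^esub> gain y x)) l = lx"
      using group_action.orbit_sym_aux[OF ga gi lx] l_def by simp
    hence e: "act (gain y x) l = lx" using grp g by (simp add: group.inv_inv)
    have s: "step_gain G B gain x y = inv\<^bsub>G\<^esub> gain y x" using xB unfolding step_gain_def by simp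
    have m: "(lab1 B y l, lab1 B x lx) \<in> M_inc P I \<Lambda> act gain"
      unfolding lab1_def M_inc_def using xB xy lL e by auto
    show ?thesis unfolding s l_def[symmetric] using lL m by simp
  qed
qed

theorem proposition2:
  fixes P B :: "'a set" and I :: "('a \<times> 'a) set"
    and G :: "('g, 'c) monoid_scheme" and \<Lambda> :: "'l set" and act :: "'g \<Rightarrow> 'l \<Rightarrow> 'l"
    and gain :: "'a \<Rightarrow> 'a \<Rightarrow> 'g" and k :: nat and u :: "nat \<Rightarrow> 'a"
  assumes "incidence_structure P B I"
    and "group G"
    and "group_action G \<Lambda> act"
    and "\<Lambda> \<noteq> {}"
    and "\<forall>(p, b) \<in> I. gain b p \<in> carrier G"
    and "k \<ge> 1"
    and "\<forall>i\<le>k. u i \<in> P \<union> B"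
  shows "(is_chain P B I k u \<longleftrightarrow>
           (\<exists>lam. (\<forall>i\<le>k. lam i \<in> \<Lambda>) \<and>
              is_chain (M_points P B \<Lambda>) (M_lines P \<Lambda>) (M_inc P I \<Lambda> act gain) k (mlab B u lam))) \<and>
         (\<forall>lam. (\<forall>i\<le>k. lam i \<in> \<Lambda>) \<and>
              is_chain (M_points P B \<Lambda>) (M_lines P \<Lambda>) (M_inc P I \<Lambda> act gain) k (mlab B u lam)
            \<longrightarrow> lam k = act (walk_gain G B gain u k) (lam 0))"
proof -
  note inc = assms(1) and ga = assms(3) and gc = assms(5) and uin = assms(7)
  have mlab: "mlab B u lam i = lab1 B (u i) (lam i)" for lam i
    unfolding mlab_def lab1_def by simp
  have memM: "mlab B u lam i \<in> M_points P B \<Lambda> \<union> M_lines P \<Lambda>" if "i \<le> k" "lam i \<in> \<Lambda>" for lam i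
    using that uin unfolding mlab_def M_points_def M_lines_def by auto
  have fwd: "((u i, u (i-1)) \<in> I \<or> (u (i-1), u i) \<in> I) \<and>
       lam i = act (step_gain G B gain (u (i-1)) (u i)) (lam (i-1))"
    if lam: "\<forall>i\<le>k. lam i \<in> \<Lambda>"
      and ch: "is_chain (M_points P B \<Lambda>) (M_lines P \<Lambda>) (M_inc P I \<Lambda> act gain) k (mlab B u lam)"
      and i: "1 \<le> i" "i \<le> k" for lam i
  proof (rule step_fwd[OF inc ga gc])
    show "lam (i-1) \<in> \<Lambda>" "lam i \<in> \<Lambda>" using lam i by simp_all
    have "(mlab B u lam i, mlab B u lam (i - 1)) \<in> M_inc P I \<Lambda> act gain \<or>
          (mlab B u lam (i - 1), mlab B u lam i) \<in> M_inc P I \<Lambda> act gain"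
      using ch i unfolding is_chain_def by blast
    then show "(lab1 B (u i) (lam i), lab1 B (u (i - 1)) (lam (i - 1))) \<in> M_inc P I \<Lambda> act gain \<or>
      (lab1 B (u (i - 1)) (lam (i - 1)), lab1 B (u i) (lam i)) \<in> M_inc P I \<Lambda> act gain"
      unfolding mlab .
  qed
  show ?thesis
  proof (intro conjI allI impI iffI)
    assume ch: "is_chain P B I k u"
    obtain l0 where l0: "l0 \<in> \<Lambda>" using assms(4) by auto
    define lam where "lam = rec_nat l0 (\<lambda>n l. act (step_gain G B gain (u n) (u (Suc n))) l)"
    have lam0: "lam 0 = l0" and lamS: "lam (Suc n) = act (step_gain G B gain (u n) (u (Suc n))) (lam n)" for n
      unfolding lam_def by simp_all
    have all: "lam i \<in> \<Lambda> \<and> (1 \<le> i \<longrightarrow> ((mlab B u lam i, mlab B u lam (i-1)) \<in> M_inc P I \<Lambda> act gain \<or>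
       (mlab B u lam (i-1), mlab B u lam i) \<in> M_inc P I \<Lambda> act gain))" if "i \<le> k" for i
      using that
    proof (induction i)
      case 0 then show ?case using l0 lam0 by simp
    next
      case (Suc n)
      have ln: "lam n \<in> \<Lambda>" using Suc by simp
      have "(u (Suc n), u n) \<in> I \<or> (u n, u (Suc n)) \<in> I"
        using ch Suc.prems unfolding is_chain_def by (metis diff_Suc_1 le_add1 plus_1_eq_Suc)
      from step_bwd[OF inc ga gc ln this] show ?case
        unfolding mlab lamS[symmetric] by simp
    qed
    show "\<exists>lam. (\<forall>i\<le>k. lam i \<in> \<Lambda>) \<and>
              is_chain (M_points P B \<Lambda>) (M_lines P \<Lambda>) (M_inc P I \<Lambda> act gain) k (mlab B u lam)"
    proof (intro exI[of _ lam] conjI)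
      show "\<forall>i\<le>k. lam i \<in> \<Lambda>" using all by blast
      show "is_chain (M_points P B \<Lambda>) (M_lines P \<Lambda>) (M_inc P I \<Lambda> act gain) k (mlab B u lam)"
        unfolding is_chain_def
      proof (intro conjI allI impI)
        fix i assume "i \<le> k" then show "mlab B u lam i \<in> M_points P B \<Lambda> \<union> M_lines P \<Lambda>"
          using memM all by blast
      next
        fix i assume "1 \<le> i \<and> i \<le> k"
        then show "(mlab B u lam i, mlab B u lam (i - 1)) \<in> M_inc P I \<Lambda> act gain \<or>
          (mlab B u lam (i - 1), mlab B u lam i) \<in> M_inc P I \<Lambda> act gain" using all by blast
      qed
    qed
  next
    assume "\<exists>lam. (\<forall>i\<le>k. lam i \<in> \<Lambda>) \<and>
              is_chain (M_points P B \<Lambda>) (M_lines P \<Lambda>) (M_inc P I \<Lambda> act gain) k (mlab B u lam)"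
    then obtain lam where l1: "\<forall>i\<le>k. lam i \<in> \<Lambda>" and
        l2: "is_chain (M_points P B \<Lambda>) (M_lines P \<Lambda>) (M_inc P I \<Lambda> act gain) k (mlab B u lam)" by blast
    show "is_chain P B I k u" unfolding is_chain_def
    proof (intro conjI allI impI)
      fix i assume "i \<le> k" then show "u i \<in> P \<union> B" using uin by blast
    next
      fix i assume "1 \<le> i \<and> i \<le> k"
      then show "(u i, u (i - 1)) \<in> I \<or> (u (i - 1), u i) \<in> I" using fwd[OF l1 l2, of i] by blast
    qed
  next
    fix lam
    assume H: "(\<forall>i\<le>k. lam i \<in> \<Lambda>) \<and>
              is_chain (M_points P B \<Lambda>) (M_lines P \<Lambda>) (M_inc P I \<Lambda> act gain) k (mlab B u lam)"
    have IPB: "I \<subseteq> P \<times> B" and dis: "P \<inter> B = {}" using inc unfolding incidence_structure_def by auto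
    have grp: "group G" by fact
    have "walk_gain G B gain u i \<in> carrier G \<and> lam i = act (walk_gain G B gain u i) (lam 0)" if "i \<le> k" for i
      using that
    proof (induction i)
      case 0
      have "lam 0 \<in> \<Lambda>" using H by simp
      then show ?case using group_action.id_eq_one[OF ga]
        by (metis grp group.is_monoid monoid.one_closed restrict_apply walk_gain.simps(1))
    next
      case (Suc n)
      have f: "((u (Suc n), u n) \<in> I \<or> (u n, u (Suc n)) \<in> I) \<and>
         lam (Suc n) = act (step_gain G B gain (u n) (u (Suc n))) (lam n)"
        using fwd[OF conjunct1[OF H] conjunct2[OF H], of "Suc n"] Suc.prems by simp
      have sg: "step_gain G B gain (u n) (u (Suc n)) \<in> carrier G"
      proof (cases "u n \<in> B")
        case True
        have "(u n, u (Suc n)) \<notin> I"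
        proof
          assume "(u n, u (Suc n)) \<in> I"
          then have "(u n, u (Suc n)) \<in> P \<times> B" using IPB by (rule subsetD[rotated])
          then have "u n \<in> P" by simp
          then show False using True dis by (simp add: disjoint_iff)
        qed
        then have "(u (Suc n), u n) \<in> I" using f by blast
        then show ?thesis using True gc unfolding step_gain_def by auto
      next
        case False
        have "(u (Suc n), u n) \<notin> I"
        proof
          assume "(u (Suc n), u n) \<in> I"
          then have "(u (Suc n), u n) \<in> P \<times> B" using IPB by (rule subsetD[rotated])
          then show False using False by simp
        qed
        then have "(u n, u (Suc n)) \<in> I" using f by blast
        then show ?thesis using False gc grp unfolding step_gain_def by (auto intro: group.inv_closed)
      qed
      have IH: "walk_gain G B gain u n \<in> carrier G" "lam n = act (walk_gain G B gain u n) (lam 0)"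
        using Suc by auto
      have l0: "lam 0 \<in> \<Lambda>" using H by simp
      have wS: "walk_gain G B gain u (Suc n) = step_gain G B gain (u n) (u (Suc n)) \<otimes>\<^bsub>G\<^esub> walk_gain G B gain u n"
        by simp
      have c1: "walk_gain G B gain u (Suc n) \<in> carrier G"
        unfolding wS using sg IH(1) grp by (metis group.is_monoid monoid.m_closed)
      have "lam (Suc n) = act (step_gain G B gain (u n) (u (Suc n))) (act (walk_gain G B gain u n) (lam 0))"
        using conjunct2[OF f] IH(2) by simp
      also have "\<dots> = act (walk_gain G B gain u (Suc n)) (lam 0)"
        unfolding wS by (rule group_action.composition_rule[OF ga l0 sg IH(1), symmetric])
      finally show ?case using c1 by blast
    qed
    from this[OF order_refl] show "lam k = act (walk_gain G B gain u k) (lam 0)" by (rule conjunct2)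
  qed
qed

end
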